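(* The category $\mathsf{PreOrdGrp}$ of preordered groups is not subtractive.
   Context: A preordered group is a pair $(G,P_G)$ with $G$ an additively written group and $P_G\subseteq G$ a submonoid closed under conjugation; morphisms are group homomorphisms $f$ with $f(P_G)\subseteq P_H$. This is $\mathsf{PreOrdGrp}$, a pointed finitely complete category (limits computed componentwise, zero object the trivial group). A pointed finitely complete category is subtractive (in the sense of Z. Janelidze) if for every reflexive internal relation $R\rightarrowtail X\times X$ such that $\langle 1_X,0\rangle\colon X\to X\times X$ factors through $R$, also $\langle 0,1_X\rangle\colon X\to X\times X$ factors through $R$. *)

theory Defs
  imports "HOL-Algebra.Group"
begin

text \<open>A preordered group: a group G (HOL-Algebra, written multiplicatively)
  together with a positive cone P, a submonoid closed under conjugation.\<close>
type_synonym 'a pgrp = "'a monoid \<times> 'a set"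

definition preord_group :: "'a pgrp \<Rightarrow> bool" where
  "preord_group X \<longleftrightarrow> group (fst X) \<and> snd X \<subseteq> carrier (fst X)
     \<and> \<one>\<^bsub>fst X\<^esub> \<in> snd X
     \<and> (\<forall>p\<in>snd X. \<forall>q\<in>snd X. p \<otimes>\<^bsub>fst X\<^esub> q \<in> snd X)
     \<and> (\<forall>g\<in>carrier (fst X). \<forall>p\<in>snd X.
          g \<otimes>\<^bsub>fst X\<^esub> p \<otimes>\<^bsub>fst X\<^esub> inv\<^bsub>fst X\<^esub> g \<in> snd X)"

definition pgrp_hom :: "'a pgrp \<Rightarrow> 'b pgrp \<Rightarrow> ('a \<Rightarrow> 'b) \<Rightarrow> bool" where
  "pgrp_hom X Y f \<longleftrightarrow> f \<in> hom (fst X) (fst Y) \<and> f ` snd X \<subseteq> snd Y"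

definition pgrp_prod :: "'a pgrp \<Rightarrow> 'b pgrp \<Rightarrow> ('a \<times> 'b) pgrp" where
  "pgrp_prod X Y = (fst X \<times>\<times> fst Y, snd X \<times> snd Y)"

text \<open>Monomorphisms of PreOrdGrp are the injective morphisms.\<close>
definition pgrp_mono :: "'a pgrp \<Rightarrow> 'b pgrp \<Rightarrow> ('a \<Rightarrow> 'b) \<Rightarrow> bool" where
  "pgrp_mono X Y f \<longleftrightarrow> pgrp_hom X Y f \<and> inj_on f (carrier (fst X))"

definition factors_through :: "'c pgrp \<Rightarrow> 'r pgrp \<Rightarrow> ('c \<Rightarrow> 'b) \<Rightarrow> ('r \<Rightarrow> 'b) \<Rightarrow> bool" where
  "factors_through A R f m \<longleftrightarrow>
     (\<exists>g. pgrp_hom A R g \<and> (\<forall>a\<in>carrier (fst A). m (g a) = f a))"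

definition internal_relation :: "'a pgrp \<Rightarrow> 'r pgrp \<Rightarrow> ('r \<Rightarrow> 'a \<times> 'a) \<Rightarrow> bool" where
  "internal_relation X R m \<longleftrightarrow> preord_group X \<and> preord_group R
     \<and> pgrp_mono R (pgrp_prod X X) m"

definition reflexive_relation :: "'a pgrp \<Rightarrow> 'r pgrp \<Rightarrow> ('r \<Rightarrow> 'a \<times> 'a) \<Rightarrow> bool" where
  "reflexive_relation X R m \<longleftrightarrow> internal_relation X R m
     \<and> factors_through X R (\<lambda>x. (x, x)) m"

definition subtractive_condition :: "'a pgrp \<Rightarrow> 'r pgrp \<Rightarrow> ('r \<Rightarrow> 'a \<times> 'a) \<Rightarrow> bool" where
  "subtractive_condition X R m \<longleftrightarrow>
     (reflexive_relation X R m \<and> factors_through X R (\<lambda>x. (x, \<one>\<^bsub>fst X\<^esub>)) m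
       \<longrightarrow> factors_through X R (\<lambda>x. (\<one>\<^bsub>fst X\<^esub>, x)) m)"

end

theory Submission
  imports Defs
begin

definition Zadd :: "int monoid" where
  "Zadd = \<lparr>carrier = UNIV, mult = (+), one = 0\<rparr>"

lemma Zadd_cg: "comm_group Zadd"
  unfolding Zadd_def
  by (rule comm_groupI) (auto intro: exI[of _ "- _"] simp: algebra_simps)

lemma Zadd_g: "group Zadd"
  using Zadd_cg comm_group.axioms(2) by blast

lemma Zadd_conj: "x \<otimes>\<^bsub>Zadd\<^esub> p \<otimes>\<^bsub>Zadd\<^esub> inv\<^bsub>Zadd\<^esub> x = p"
proof -
  interpret comm_group Zadd by (rule Zadd_cg)
  have c: "carrier Zadd = UNIV" by (simp add: Zadd_def)
  show ?thesis
    by (simp add: c m_comm[of x p] m_assoc)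
qed

lemma DZ_g: "group (Zadd \<times>\<times> Zadd)"
  using Zadd_g Zadd_g by (rule DirProd_group)

lemma DZ_cg: "comm_group (Zadd \<times>\<times> Zadd)"
proof -
  interpret group "Zadd \<times>\<times> Zadd" by (rule DZ_g)
  show ?thesis
    by unfold_locales (auto simp: DirProd_def Zadd_def)
qed

lemma DZ_conj: "x \<otimes>\<^bsub>Zadd \<times>\<times> Zadd\<^esub> p \<otimes>\<^bsub>Zadd \<times>\<times> Zadd\<^esub> inv\<^bsub>Zadd \<times>\<times> Zadd\<^esub> x = p"
proof -
  interpret comm_group "Zadd \<times>\<times> Zadd" by (rule DZ_cg)
  have x: "x \<in> carrier (Zadd \<times>\<times> Zadd)" and p: "p \<in> carrier (Zadd \<times>\<times> Zadd)"
    by (auto simp: Zadd_def DirProd_def)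
  have "x \<otimes>\<^bsub>Zadd \<times>\<times> Zadd\<^esub> p = p \<otimes>\<^bsub>Zadd \<times>\<times> Zadd\<^esub> x" using x p by (rule m_comm)
  then show ?thesis using m_assoc[OF p x inv_closed[OF x]] r_inv[OF x] r_one[OF p] by simp
qed

definition XX :: "int pgrp" where "XX = (Zadd, {x. 0 \<le> x})"
definition RR :: "(int \<times> int) pgrp" where
  "RR = (Zadd \<times>\<times> Zadd, {(a,b). 0 \<le> b \<and> b \<le> a})"

lemma XX_pg: "preord_group XX"
  unfolding preord_group_def XX_def using Zadd_g
  by (simp add: Zadd_conj) (auto simp: Zadd_def)

lemma RR_pg: "preord_group RR"
  unfolding preord_group_def RR_def using DZ_g
  by (simp add: DZ_conj) (auto simp: Zadd_def DirProd_def)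

lemma id_hom: "pgrp_hom RR (pgrp_prod XX XX) id"
  unfolding pgrp_hom_def RR_def XX_def pgrp_prod_def hom_def
  by auto

theorem corollary3p10:
  shows "\<not> (\<forall>(X :: int pgrp) (R :: (int \<times> int) pgrp) (m :: int \<times> int \<Rightarrow> int \<times> int).
             subtractive_condition X R m)"
proof
  assume A: "\<forall>(X :: int pgrp) (R :: (int \<times> int) pgrp) (m :: int \<times> int \<Rightarrow> int \<times> int).
             subtractive_condition X R m"
  have ir: "internal_relation XX RR id"
    unfolding internal_relation_def pgrp_mono_def using XX_pg RR_pg id_hom by auto
  have f1: "factors_through XX RR (\<lambda>x. (x, x)) id"
    unfolding factors_through_def
  proof (intro exI conjI)
    show "pgrp_hom XX RR (\<lambda>x. (x, x))"
      unfolding pgrp_hom_def XX_def RR_def hom_def by (auto simp: Zadd_def DirProd_def)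
  qed auto
  have f2: "factors_through XX RR (\<lambda>x. (x, \<one>\<^bsub>fst XX\<^esub>)) id"
    unfolding factors_through_def
  proof (intro exI conjI)
    show "pgrp_hom XX RR (\<lambda>x. (x, 0))"
      unfolding pgrp_hom_def XX_def RR_def hom_def by (auto simp: Zadd_def DirProd_def)
  qed (auto simp: XX_def Zadd_def)
  have "factors_through XX RR (\<lambda>x. (\<one>\<^bsub>fst XX\<^esub>, x)) id"
    using A ir f1 f2 unfolding subtractive_condition_def reflexive_relation_def by blast
  then obtain g where g: "pgrp_hom XX RR g" "\<forall>a\<in>carrier (fst XX). g a = (0, a)"
    unfolding factors_through_def by (auto simp: XX_def Zadd_def)
  have "g 1 \<in> snd RR" using g(1) unfolding pgrp_hom_def XX_def by auto
  moreover have "g 1 = (0, 1)" using g(2) by (simp add: XX_def Zadd_def)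
  ultimately show False by (simp add: RR_def)
qed

end
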